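(* Let $Y\subset\mathbb{R}^n$ be open, and let $\omega\colon Y\to\mathbb{R}^n$, $f\colon Y\to\mathbb{R}^n$, $F\colon Y\to\mathbb{R}$, $H\colon Y\to\mathbb{R}^{n\times m}$, $g\colon Y\to\mathbb{R}^m$, $g^{\mathrm{num}}\colon Y\times Y\to\mathbb{R}^m$, $f^{\mathrm{num}}\colon Y\times Y\to\mathbb{R}^n$ be arbitrary with $f^{\mathrm{num}}(u,u)=f(u)$, $g^{\mathrm{num}}(u,u)=g(u)$. Then the following are equivalent: (A) there exists $F^{\mathrm{num}}\colon Y\times Y\to\mathbb{R}$ with $F^{\mathrm{num}}(u,u)=F(u)$ such that for all $u_-,u_0,u_+\in Y$, $$\omega(u_0)\cdot\Big(f^{\mathrm{num}}(u_0,u_+)-f^{\mathrm{num}}(u_-,u_0)+H(u_0)g^{\mathrm{num}}(u_0,u_+)-H(u_0)g^{\mathrm{num}}(u_-,u_0)\Big)\ \ge\ F^{\mathrm{num}}(u_0,u_+)-F^{\mathrm{num}}(u_-,u_0);$$ (B) for all $u_-,u_+\in Y$, $$[\![\omega]\!]\cdot f^{\mathrm{num}}(u_-,u_+)+[\![\omega\cdot H]\!]\,g^{\mathrm{num}}(u_-,u_+)-[\![\omega\cdot Hg]\!]\ \le\ [\![\omega\cdot f-F]\!].$$ Moreover, there exists a consistent $F^{\mathrm{num}}$ with equality in (A) for all triples iff (B) holds with equality for all pairs, and then $$F^{\mathrm{num}}=\{\{F\}\}+\{\{\omega\}\}\cdot f^{\mathrm{num}}-\{\{\omega\cdot f\}\}-\{\{\omega\cdot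 Hg\}\}+\{\{\omega\cdot H\}\}\,g^{\mathrm{num}}.$$
   Context: For a function $a$ on $Y$ and states $u_\pm$: $\{\{a\}\}=\tfrac12(a(u_-)+a(u_+))$, $[\![a]\!]=a(u_+)-a(u_-)$; $\omega\cdot H=\omega^TH\in\mathbb{R}^{1\times m}$ and $\omega\cdot Hg=\omega^THg\in\mathbb{R}$; numerical fluxes are evaluated at $(u_-,u_+)$. *)

theory Defs
  imports "HOL-Analysis.Analysis"
begin

definition avg :: "('a \<Rightarrow> 'b::real_vector) \<Rightarrow> 'a \<Rightarrow> 'a \<Rightarrow> 'b" where
  "avg a um up = (1/2) *\<^sub>R (a um + a up)"

definition jump :: "('a \<Rightarrow> 'b::real_vector) \<Rightarrow> 'a \<Rightarrow> 'a \<Rightarrow> 'b" where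
  "jump a um up = a up - a um"

end

theory Submission
  imports Defs
begin

theorem mainTheorem5:
  fixes Y :: "(real^'n) set"
    and \<omega> f :: "real^'n \<Rightarrow> real^'n"
    and F :: "real^'n \<Rightarrow> real"
    and H :: "real^'n \<Rightarrow> real^'m^'n"
    and g :: "real^'n \<Rightarrow> real^'m"
    and gnum :: "real^'n \<Rightarrow> real^'n \<Rightarrow> real^'m"
    and fnum :: "real^'n \<Rightarrow> real^'n \<Rightarrow> real^'n"
  assumes "open Y"
    and "\<And>u. u \<in> Y \<Longrightarrow> fnum u u = f u"
    and "\<And>u. u \<in> Y \<Longrightarrow> gnum u u = g u"
  shows
   "((\<exists>Fnum :: real^'n \<Rightarrow> real^'n \<Rightarrow> real.
        (\<forall>u\<in>Y. Fnum u u = F u) \<and>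
        (\<forall>um\<in>Y. \<forall>u0\<in>Y. \<forall>up\<in>Y.
           \<omega> u0 \<bullet> (fnum u0 up - fnum um u0 + H u0 *v gnum u0 up - H u0 *v gnum um u0)
             \<ge> Fnum u0 up - Fnum um u0))
     \<longleftrightarrow>
     (\<forall>um\<in>Y. \<forall>up\<in>Y.
        jump \<omega> um up \<bullet> fnum um up
        + jump (\<lambda>u. \<omega> u v* H u) um up \<bullet> gnum um up
        - jump (\<lambda>u. \<omega> u \<bullet> (H u *v g u)) um up
        \<le> jump (\<lambda>u. \<omega> u \<bullet> f u - F u) um up))
  \<and>
   ((\<exists>Fnum :: real^'n \<Rightarrow> real^'n \<Rightarrow> real.
        (\<forall>u\<in>Y. Fnum u u = F u) \<and>
        (\<forall>um\<in>Y. \<forall>u0\<in>Y. \<forall>up\<in>Y.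
           \<omega> u0 \<bullet> (fnum u0 up - fnum um u0 + H u0 *v gnum u0 up - H u0 *v gnum um u0)
             = Fnum u0 up - Fnum um u0))
     \<longleftrightarrow>
     (\<forall>um\<in>Y. \<forall>up\<in>Y.
        jump \<omega> um up \<bullet> fnum um up
        + jump (\<lambda>u. \<omega> u v* H u) um up \<bullet> gnum um up
        - jump (\<lambda>u. \<omega> u \<bullet> (H u *v g u)) um up
        = jump (\<lambda>u. \<omega> u \<bullet> f u - F u) um up))
  \<and>
   (\<forall>Fnum :: real^'n \<Rightarrow> real^'n \<Rightarrow> real.
        ((\<forall>u\<in>Y. Fnum u u = F u) \<and>
         (\<forall>um\<in>Y. \<forall>u0\<in>Y. \<forall>up\<in>Y.
           \<omega> u0 \<bullet> (fnum u0 up - fnum um u0 + H u0 *v gnum u0 up - H u0 *v gnum um u0)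
             = Fnum u0 up - Fnum um u0))
      \<longrightarrow>
        (\<forall>um\<in>Y. \<forall>up\<in>Y.
           Fnum um up = avg F um up + avg \<omega> um up \<bullet> fnum um up
             - avg (\<lambda>u. \<omega> u \<bullet> f u) um up
             - avg (\<lambda>u. \<omega> u \<bullet> (H u *v g u)) um up
             + avg (\<lambda>u. \<omega> u v* H u) um up \<bullet> gnum um up))"
  proof -
  note fd = assms(2) and gd = assms(3)
  define c where "c u = \<omega> u \<bullet> f u + \<omega> u \<bullet> (H u *v g u) - F u" for u
  define lo where "lo a b = \<omega> b \<bullet> fnum a b + \<omega> b \<bullet> (H b *v gnum a b) - c b" for a b
  define hi where "hi a b = \<omega> a \<bullet> fnum a b + \<omega> a \<bullet> (H a *v gnum a b) - c a" for a b
  have T: "\<omega> u0 \<bullet> (fnum u0 up - fnum um u0 + H u0 *v gnum u0 up - H u0 *v gnum um u0)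
      = (\<omega> u0 \<bullet> fnum u0 up + \<omega> u0 \<bullet> (H u0 *v gnum u0 up))
       - (\<omega> u0 \<bullet> fnum um u0 + \<omega> u0 \<bullet> (H u0 *v gnum um u0))" for um u0 up
    by (simp add: inner_diff_right inner_add_right)
  have J: "jump \<omega> a b \<bullet> fnum a b
        + jump (\<lambda>u. \<omega> u v* H u) a b \<bullet> gnum a b
        - jump (\<lambda>u. \<omega> u \<bullet> (H u *v g u)) a b
        - jump (\<lambda>u. \<omega> u \<bullet> f u - F u) a b = lo a b - hi a b" for a b
    by (simp add: jump_def lo_def hi_def c_def inner_diff_left dot_lmul_matrix algebra_simps)
  have charI: "(\<forall>um\<in>Y. \<forall>u0\<in>Y. \<forall>up\<in>Y.
           \<omega> u0 \<bullet> (fnum u0 up - fnum um u0 + H u0 *v gnum u0 up - H u0 *v gnum um u0)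
             \<ge> Fnum u0 up - Fnum um u0)
     \<longleftrightarrow> (\<forall>a\<in>Y. \<forall>b\<in>Y. lo a b \<le> Fnum a b \<and> Fnum a b \<le> hi a b)"
    if D: "\<forall>u\<in>Y. Fnum u u = F u" for Fnum
  proof
    assume L: "\<forall>um\<in>Y. \<forall>u0\<in>Y. \<forall>up\<in>Y.
           \<omega> u0 \<bullet> (fnum u0 up - fnum um u0 + H u0 *v gnum u0 up - H u0 *v gnum um u0)
             \<ge> Fnum u0 up - Fnum um u0"
    show "\<forall>a\<in>Y. \<forall>b\<in>Y. lo a b \<le> Fnum a b \<and> Fnum a b \<le> hi a b"
    proof (intro ballI conjI)
      fix a b assume a: "a \<in> Y" and b: "b \<in> Y"
      from L a b have "\<omega> b \<bullet> (fnum b b - fnum a b + H b *v gnum b b - H b *v gnum a b)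
             \<ge> Fnum b b - Fnum a b" by blast
      then show "lo a b \<le> Fnum a b" using D fd gd b
        by (simp add: inner_diff_right inner_add_right lo_def c_def)
      from L a b have "\<omega> a \<bullet> (fnum a b - fnum a a + H a *v gnum a b - H a *v gnum a a)
             \<ge> Fnum a b - Fnum a a" by blast
      then show "Fnum a b \<le> hi a b" using D fd gd a
        by (simp add: inner_diff_right inner_add_right hi_def c_def)
    qed
  next
    assume R: "\<forall>a\<in>Y. \<forall>b\<in>Y. lo a b \<le> Fnum a b \<and> Fnum a b \<le> hi a b"
    show "\<forall>um\<in>Y. \<forall>u0\<in>Y. \<forall>up\<in>Y.
           \<omega> u0 \<bullet> (fnum u0 up - fnum um u0 + H u0 *v gnum u0 up - H u0 *v gnum um u0)
             \<ge> Fnum u0 up - Fnum um u0"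
    proof (intro ballI)
      fix um u0 up assume "um \<in> Y" "u0 \<in> Y" "up \<in> Y"
      with R have "lo um u0 \<le> Fnum um u0" "Fnum u0 up \<le> hi u0 up" by auto
      then show "\<omega> u0 \<bullet> (fnum u0 up - fnum um u0 + H u0 *v gnum u0 up - H u0 *v gnum um u0)
             \<ge> Fnum u0 up - Fnum um u0"
        by (simp add: T lo_def hi_def)
    qed
  qed
  have charE: "(\<forall>um\<in>Y. \<forall>u0\<in>Y. \<forall>up\<in>Y.
           \<omega> u0 \<bullet> (fnum u0 up - fnum um u0 + H u0 *v gnum u0 up - H u0 *v gnum um u0)
             = Fnum u0 up - Fnum um u0)
     \<longleftrightarrow> (\<forall>a\<in>Y. \<forall>b\<in>Y. lo a b = Fnum a b \<and> Fnum a b = hi a b)"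
    if D: "\<forall>u\<in>Y. Fnum u u = F u" for Fnum
  proof
    assume L: "\<forall>um\<in>Y. \<forall>u0\<in>Y. \<forall>up\<in>Y.
           \<omega> u0 \<bullet> (fnum u0 up - fnum um u0 + H u0 *v gnum u0 up - H u0 *v gnum um u0)
             = Fnum u0 up - Fnum um u0"
    show "\<forall>a\<in>Y. \<forall>b\<in>Y. lo a b = Fnum a b \<and> Fnum a b = hi a b"
    proof (intro ballI conjI)
      fix a b assume a: "a \<in> Y" and b: "b \<in> Y"
      from L a b have "\<omega> b \<bullet> (fnum b b - fnum a b + H b *v gnum b b - H b *v gnum a b)
             = Fnum b b - Fnum a b" by blast
      then show "lo a b = Fnum a b" using D fd gd b
        by (simp add: inner_diff_right inner_add_right lo_def c_def)
      from L a b have "\<omega> a \<bullet> (fnum a b - fnum a a + H a *v gnum a b - H a *v gnum a a)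
             = Fnum a b - Fnum a a" by blast
      then show "Fnum a b = hi a b" using D fd gd a
        by (simp add: inner_diff_right inner_add_right hi_def c_def)
    qed
  next
    assume R: "\<forall>a\<in>Y. \<forall>b\<in>Y. lo a b = Fnum a b \<and> Fnum a b = hi a b"
    show "\<forall>um\<in>Y. \<forall>u0\<in>Y. \<forall>up\<in>Y.
           \<omega> u0 \<bullet> (fnum u0 up - fnum um u0 + H u0 *v gnum u0 up - H u0 *v gnum um u0)
             = Fnum u0 up - Fnum um u0"
    proof (intro ballI)
      fix um u0 up assume "um \<in> Y" "u0 \<in> Y" "up \<in> Y"
      with R have "lo um u0 = Fnum um u0" "Fnum u0 up = hi u0 up" by auto
      then show "\<omega> u0 \<bullet> (fnum u0 up - fnum um u0 + H u0 *v gnum u0 up - H u0 *v gnum um u0)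
             = Fnum u0 up - Fnum um u0"
        by (simp add: T lo_def hi_def)
    qed
  qed
  have lodiag: "lo u u = F u" if "u \<in> Y" for u
    using that fd gd by (simp add: lo_def c_def)
  have Jle: "(jump \<omega> a b \<bullet> fnum a b
        + jump (\<lambda>u. \<omega> u v* H u) a b \<bullet> gnum a b
        - jump (\<lambda>u. \<omega> u \<bullet> (H u *v g u)) a b
        \<le> jump (\<lambda>u. \<omega> u \<bullet> f u - F u) a b) \<longleftrightarrow> lo a b \<le> hi a b" for a b
    using J[of a b] by linarith
  have Jeq: "(jump \<omega> a b \<bullet> fnum a b
        + jump (\<lambda>u. \<omega> u v* H u) a b \<bullet> gnum a b
        - jump (\<lambda>u. \<omega> u \<bullet> (H u *v g u)) a b
        = jump (\<lambda>u. \<omega> u \<bullet> f u - F u) a b) \<longleftrightarrow> lo a b = hi a b" for a b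
    using J[of a b] by linarith
  have D0: "\<forall>u\<in>Y. lo u u = F u" using lodiag by blast
  show ?thesis
  proof (intro conjI)
    show "(\<exists>Fnum :: real^'n \<Rightarrow> real^'n \<Rightarrow> real.
        (\<forall>u\<in>Y. Fnum u u = F u) \<and>
        (\<forall>um\<in>Y. \<forall>u0\<in>Y. \<forall>up\<in>Y.
           \<omega> u0 \<bullet> (fnum u0 up - fnum um u0 + H u0 *v gnum u0 up - H u0 *v gnum um u0)
             \<ge> Fnum u0 up - Fnum um u0))
     \<longleftrightarrow>
     (\<forall>um\<in>Y. \<forall>up\<in>Y.
        jump \<omega> um up \<bullet> fnum um up
        + jump (\<lambda>u. \<omega> u v* H u) um up \<bullet> gnum um up
        - jump (\<lambda>u. \<omega> u \<bullet> (H u *v g u)) um up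
        \<le> jump (\<lambda>u. \<omega> u \<bullet> f u - F u) um up)"
      unfolding Jle
    proof
      assume "\<exists>Fnum :: real^'n \<Rightarrow> real^'n \<Rightarrow> real.
        (\<forall>u\<in>Y. Fnum u u = F u) \<and>
        (\<forall>um\<in>Y. \<forall>u0\<in>Y. \<forall>up\<in>Y.
           \<omega> u0 \<bullet> (fnum u0 up - fnum um u0 + H u0 *v gnum u0 up - H u0 *v gnum um u0)
             \<ge> Fnum u0 up - Fnum um u0)"
      then obtain Fnum :: "real^'n \<Rightarrow> real^'n \<Rightarrow> real" where d: "\<forall>u\<in>Y. Fnum u u = F u"
        and i: "\<forall>um\<in>Y. \<forall>u0\<in>Y. \<forall>up\<in>Y.
           \<omega> u0 \<bullet> (fnum u0 up - fnum um u0 + H u0 *v gnum u0 up - H u0 *v gnum um u0)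
             \<ge> Fnum u0 up - Fnum um u0" by blast
      from i charI[of Fnum, OF d] show "\<forall>um\<in>Y. \<forall>up\<in>Y. lo um up \<le> hi um up" by force
    next
      assume "\<forall>um\<in>Y. \<forall>up\<in>Y. lo um up \<le> hi um up"
      then have "\<forall>um\<in>Y. \<forall>u0\<in>Y. \<forall>up\<in>Y.
           \<omega> u0 \<bullet> (fnum u0 up - fnum um u0 + H u0 *v gnum u0 up - H u0 *v gnum um u0)
             \<ge> lo u0 up - lo um u0" using charI[of lo, OF D0] by auto
      then show "\<exists>Fnum :: real^'n \<Rightarrow> real^'n \<Rightarrow> real.
        (\<forall>u\<in>Y. Fnum u u = F u) \<and>
        (\<forall>um\<in>Y. \<forall>u0\<in>Y. \<forall>up\<in>Y.
           \<omega> u0 \<bullet> (fnum u0 up - fnum um u0 + H u0 *v gnum u0 up - H u0 *v gnum um u0)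
             \<ge> Fnum u0 up - Fnum um u0)" using D0 by blast
    qed
    show "(\<exists>Fnum :: real^'n \<Rightarrow> real^'n \<Rightarrow> real.
        (\<forall>u\<in>Y. Fnum u u = F u) \<and>
        (\<forall>um\<in>Y. \<forall>u0\<in>Y. \<forall>up\<in>Y.
           \<omega> u0 \<bullet> (fnum u0 up - fnum um u0 + H u0 *v gnum u0 up - H u0 *v gnum um u0)
             = Fnum u0 up - Fnum um u0))
     \<longleftrightarrow>
     (\<forall>um\<in>Y. \<forall>up\<in>Y.
        jump \<omega> um up \<bullet> fnum um up
        + jump (\<lambda>u. \<omega> u v* H u) um up \<bullet> gnum um up
        - jump (\<lambda>u. \<omega> u \<bullet> (H u *v g u)) um up
        = jump (\<lambda>u. \<omega> u \<bullet> f u - F u) um up)"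
      unfolding Jeq
    proof
      assume "\<exists>Fnum :: real^'n \<Rightarrow> real^'n \<Rightarrow> real.
        (\<forall>u\<in>Y. Fnum u u = F u) \<and>
        (\<forall>um\<in>Y. \<forall>u0\<in>Y. \<forall>up\<in>Y.
           \<omega> u0 \<bullet> (fnum u0 up - fnum um u0 + H u0 *v gnum u0 up - H u0 *v gnum um u0)
             = Fnum u0 up - Fnum um u0)"
      then obtain Fnum :: "real^'n \<Rightarrow> real^'n \<Rightarrow> real" where d: "\<forall>u\<in>Y. Fnum u u = F u"
        and i: "\<forall>um\<in>Y. \<forall>u0\<in>Y. \<forall>up\<in>Y.
           \<omega> u0 \<bullet> (fnum u0 up - fnum um u0 + H u0 *v gnum u0 up - H u0 *v gnum um u0)
             = Fnum u0 up - Fnum um u0" by blast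
      from i charE[of Fnum, OF d] show "\<forall>um\<in>Y. \<forall>up\<in>Y. lo um up = hi um up" by force
    next
      assume "\<forall>um\<in>Y. \<forall>up\<in>Y. lo um up = hi um up"
      then have "\<forall>um\<in>Y. \<forall>u0\<in>Y. \<forall>up\<in>Y.
           \<omega> u0 \<bullet> (fnum u0 up - fnum um u0 + H u0 *v gnum u0 up - H u0 *v gnum um u0)
             = lo u0 up - lo um u0" using charE[of lo, OF D0] by auto
      then show "\<exists>Fnum :: real^'n \<Rightarrow> real^'n \<Rightarrow> real.
        (\<forall>u\<in>Y. Fnum u u = F u) \<and>
        (\<forall>um\<in>Y. \<forall>u0\<in>Y. \<forall>up\<in>Y.
           \<omega> u0 \<bullet> (fnum u0 up - fnum um u0 + H u0 *v gnum u0 up - H u0 *v gnum um u0)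
             = Fnum u0 up - Fnum um u0)" using D0 by blast
    qed
    show "\<forall>Fnum :: real^'n \<Rightarrow> real^'n \<Rightarrow> real.
        ((\<forall>u\<in>Y. Fnum u u = F u) \<and>
         (\<forall>um\<in>Y. \<forall>u0\<in>Y. \<forall>up\<in>Y.
           \<omega> u0 \<bullet> (fnum u0 up - fnum um u0 + H u0 *v gnum u0 up - H u0 *v gnum um u0)
             = Fnum u0 up - Fnum um u0))
      \<longrightarrow>
        (\<forall>um\<in>Y. \<forall>up\<in>Y.
           Fnum um up = avg F um up + avg \<omega> um up \<bullet> fnum um up
             - avg (\<lambda>u. \<omega> u \<bullet> f u) um up
             - avg (\<lambda>u. \<omega> u \<bullet> (H u *v g u)) um up
             + avg (\<lambda>u. \<omega> u v* H u) um up \<bullet> gnum um up)"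
    proof (intro allI impI ballI, elim conjE)
      fix Fnum :: "real^'n \<Rightarrow> real^'n \<Rightarrow> real" and um up
      assume d: "\<forall>u\<in>Y. Fnum u u = F u" and i: "\<forall>um\<in>Y. \<forall>u0\<in>Y. \<forall>up\<in>Y.
           \<omega> u0 \<bullet> (fnum u0 up - fnum um u0 + H u0 *v gnum u0 up - H u0 *v gnum um u0)
             = Fnum u0 up - Fnum um u0" and a: "um \<in> Y" and b: "up \<in> Y"
      from i charE[of Fnum, OF d] a b have e: "lo um up = Fnum um up" "Fnum um up = hi um up" by auto
      then have "Fnum um up = (lo um up + hi um up) / 2" by simp
      then show "Fnum um up = avg F um up + avg \<omega> um up \<bullet> fnum um up
             - avg (\<lambda>u. \<omega> u \<bullet> f u) um up
             - avg (\<lambda>u. \<omega> u \<bullet> (H u *v g u)) um up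
             + avg (\<lambda>u. \<omega> u v* H u) um up \<bullet> gnum um up"
        by (simp add: avg_def lo_def hi_def c_def inner_add_left dot_lmul_matrix field_simps)
    qed
  qed
qed

end
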